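(* Let $(\mathcal{S}_1,\mathcal{S}_2)$ be an $S$-pair, let $i\in\{1,2\}$, and let $A \in \mathcal{S}_i$ with $\alpha = |A|$. Suppose that for some $j \in \{1,\dots,\alpha-1\}$ and some $x \in A$, every $j$-element subset of $A - x$ lies in $\mathcal{S}_i$. Then every $j$-element subset of $A$ lies in $\mathcal{S}_i$.
   Context: Let $S$ be a finite nonempty set and $\mathcal{S}_1, \mathcal{S}_2 \subseteq 2^S$. The pair $(\mathcal{S}_1,\mathcal{S}_2)$ is an $S$-pair if: (S1) for $i=1,2$, if $A,B \in \mathcal{S}_i$ with $B \subset A$ and $|A| = |B|+1$, then every $|B|$-element subset of $A$ lies in $\mathcal{S}_i$; (S2) for $i=1,2$, if $A,B \in \mathcal{S}_i$ with $|A|=|B|$ and $|A\cap B| = |A|-1$, then $A\cup B \in \mathcal{S}_i$; (S3) for $i=1,2$, not every singleton $\{s\}$, $s\in S$, lies in $\mathcal{S}_i$, and $S \notin \mathcal{S}_i$; (S4) for $k = 1,\dots,|S|-1$ and $x\in S$, if every $k$-element subset of $S - x$ lies in $\mathcal{S}_1$, then not every $(|S|-k)$-element subset of $S-x$ lies in $\mathcal{S}_2$. *)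

theory Defs
  imports Main
begin

definition S_pair :: "'a set \<Rightarrow> 'a set set \<Rightarrow> 'a set set \<Rightarrow> bool" where
  "S_pair S S1 S2 \<longleftrightarrow>
     finite S \<and> S \<noteq> {} \<and> S1 \<subseteq> Pow S \<and> S2 \<subseteq> Pow S \<and>
     (\<forall>F \<in> {S1, S2}.
        (\<forall>A \<in> F. \<forall>B \<in> F. B \<subset> A \<and> card A = card B + 1 \<longrightarrow>
            (\<forall>C. C \<subseteq> A \<and> card C = card B \<longrightarrow> C \<in> F)) \<and>
        (\<forall>A \<in> F. \<forall>B \<in> F. card A = card B \<and> card (A \<inter> B) = card A - 1 \<longrightarrow>
            A \<union> B \<in> F) \<and>
        \<not> (\<forall>s \<in> S. {s} \<in> F) \<and> S \<notin> F) \<and>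
     (\<forall>k \<in> {1..card S - 1}. \<forall>x \<in> S.
        (\<forall>C. C \<subseteq> S - {x} \<and> card C = k \<longrightarrow> C \<in> S1) \<longrightarrow>
        \<not> (\<forall>C. C \<subseteq> S - {x} \<and> card C = card S - k \<longrightarrow> C \<in> S2))"

end

theory Submission
  imports Defs
begin

lemma up_lem:
  assumes U: "\<forall>A\<in>F. \<forall>B\<in>F. card A = card B \<and> card (A \<inter> B) = card A - 1 \<longrightarrow> A \<union> B \<in> F"
    and fin: "finite X" and j: "1 \<le> j"
    and base: "\<forall>C. C \<subseteq> X \<and> card C = j \<longrightarrow> C \<in> F"
  shows "C \<subseteq> X \<Longrightarrow> j \<le> card C \<Longrightarrow> C \<in> F"
proof (induction "card C" arbitrary: C rule: less_induct)
  case less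
  show ?case
  proof (cases "card C = j")
    case True then show ?thesis using base less.prems by blast
  next
    case False
    have fC: "finite C" using less.prems fin finite_subset by blast
    have c2: "card C \<ge> 2" using False less.prems j by linarith
    then obtain a where a: "a \<in> C" by (metis card.empty ex_in_conv not_numeral_le_zero)
    have "card (C - {a}) \<ge> 1" using c2 a fC by simp
    then obtain b where b: "b \<in> C - {a}" by (metis card.empty ex_in_conv not_one_le_zero)
    have ca: "card (C - {a}) = card C - 1" using a fC by simp
    have cb: "card (C - {b}) = card C - 1" using b fC by simp
    have Fa: "C - {a} \<in> F"
      by (rule less.hyps[of "C - {a}"]) (use ca less.prems False c2 in \<open>auto\<close>)
    have Fb: "C - {b} \<in> F"
      by (rule less.hyps[of "C - {b}"]) (use cb less.prems False c2 in \<open>auto\<close>)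
    have i: "(C - {a}) \<inter> (C - {b}) = C - {a,b}" by blast
    have ci: "card (C - {a,b}) = card C - 2" using a b fC by (subst card_Diff_subset) auto
    have u: "(C - {a}) \<union> (C - {b}) = C" using b by blast
    have "card ((C - {a}) \<inter> (C - {b})) = card (C - {a}) - 1" using i ci ca c2 by simp
    hence "(C - {a}) \<union> (C - {b}) \<in> F" using U[rule_format, OF Fa Fb] ca cb by simp
    thus ?thesis using u by simp
  qed
qed

lemma down_lem:
  assumes D: "\<forall>A\<in>F. \<forall>B\<in>F. B \<subset> A \<and> card A = card B + 1 \<longrightarrow> (\<forall>C. C \<subseteq> A \<and> card C = card B \<longrightarrow> C \<in> F)"
    and fin: "finite A" and AF: "A \<in> F" and x: "x \<in> A"
    and sub: "\<forall>C. C \<subseteq> A - {x} \<and> j \<le> card C \<longrightarrow> C \<in> F"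
  shows "C \<subseteq> A \<Longrightarrow> j \<le> card C \<Longrightarrow> C \<in> F"
proof (induction "card A - card C" arbitrary: C rule: less_induct)
  case less
  show ?case
  proof (cases "C = A")
    case True then show ?thesis using AF by simp
  next
    case False
    show ?thesis
    proof (cases "x \<in> C")
      case False then show ?thesis using sub less.prems by blast
    next
      case True
      have fC: "finite C" using less.prems fin finite_subset by blast
      obtain y where y: "y \<in> A" "y \<notin> C" using False less.prems by blast
      define Dd where "Dd = insert y C"
      have cD: "card Dd = card C + 1" using y fC Dd_def by simp
      have DA: "Dd \<subseteq> A" using y less.prems Dd_def by blast
      have "card Dd \<le> card A" using DA fin card_mono by blast
      hence "card A - card Dd < card A - card C" using cD by linarith
      hence DF: "Dd \<in> F"
        by (rule less.hyps) (use DA cD less.prems in \<open>auto\<close>)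
      define B where "B = Dd - {x}"
      have cB: "card B = card C" using cD True B_def Dd_def fC by simp
      have "B \<subseteq> A - {x}" using DA B_def by blast
      hence BF: "B \<in> F" using sub[rule_format, of B] cB less.prems by simp
      have "B \<subset> Dd" using True B_def Dd_def by blast
      moreover have "C \<subseteq> Dd" using Dd_def by blast
      ultimately show ?thesis using D[rule_format, OF DF BF] cD cB by simp
    qed
  qed
qed

theorem mainTheorem6:
  fixes S :: "'a set" and S1 S2 :: "'a set set"
  assumes "S_pair S S1 S2"
    and "i \<in> {1::nat, 2}"
    and "A \<in> (if i = 1 then S1 else S2)"
    and "j \<in> {1..card A - 1}"
    and "x \<in> A"
    and "\<forall>C. C \<subseteq> A - {x} \<and> card C = j \<longrightarrow> C \<in> (if i = 1 then S1 else S2)"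
  shows "\<forall>C. C \<subseteq> A \<and> card C = j \<longrightarrow> C \<in> (if i = 1 then S1 else S2)"
proof -
  define F where "F = (if i = 1 then S1 else S2)"
  have FS: "F \<in> {S1, S2}" using F_def by simp
  have all: "\<forall>F \<in> {S1, S2}.
        (\<forall>A \<in> F. \<forall>B \<in> F. B \<subset> A \<and> card A = card B + 1 \<longrightarrow>
            (\<forall>C. C \<subseteq> A \<and> card C = card B \<longrightarrow> C \<in> F)) \<and>
        (\<forall>A \<in> F. \<forall>B \<in> F. card A = card B \<and> card (A \<inter> B) = card A - 1 \<longrightarrow>
            A \<union> B \<in> F) \<and>
        \<not> (\<forall>s \<in> S. {s} \<in> F) \<and> S \<notin> F"
    apply (insert assms(1)[unfolded S_pair_def]) apply (elim conjE) apply assumption done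
  have P: "S1 \<subseteq> Pow S" "S2 \<subseteq> Pow S" "finite S"
    by (insert assms(1)[unfolded S_pair_def], (elim conjE, assumption))+
  from bspec[OF all FS] have
   D: "\<forall>A\<in>F. \<forall>B\<in>F. B \<subset> A \<and> card A = card B + 1 \<longrightarrow> (\<forall>C. C \<subseteq> A \<and> card C = card B \<longrightarrow> C \<in> F)"
   and U: "\<forall>A\<in>F. \<forall>B\<in>F. card A = card B \<and> card (A \<inter> B) = card A - 1 \<longrightarrow> A \<union> B \<in> F"
    by (rule conjunct1, rule conjunct1[OF conjunct2])
  have "F \<subseteq> Pow S" "finite S" using P FS by auto
  hence finA: "finite A" using assms(3) F_def finite_subset by blast
  have j1: "1 \<le> j" using assms(4) by simp
  have sub: "\<forall>C. C \<subseteq> A - {x} \<and> j \<le> card C \<longrightarrow> C \<in> F"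
  proof (intro allI impI)
    fix C assume C: "C \<subseteq> A - {x} \<and> j \<le> card C"
    have base: "\<forall>C. C \<subseteq> A - {x} \<and> card C = j \<longrightarrow> C \<in> F" using assms(6) F_def by simp
    show "C \<in> F" using up_lem[OF U _ j1 base] finA C by simp
  qed
  have AF: "A \<in> F" using assms(3) F_def by simp
  show ?thesis unfolding F_def[symmetric]
    using down_lem[OF D finA AF assms(5) sub] by simp
qed

end
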